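(* There exist a simple polygon $P$ with edge set $E$, an additive-weight function $\delta\colon E\to\mathbb{R}^+_0$, and an edge $e\in E$ such that the face $f(e)$ of the additively-weighted straight skeleton is not monotone with respect to $e$ (i.e., with respect to the supporting line of $e$).
   Context: Additively-weighted wavefront: For each edge $e$ of $P$ let $\overline{e}$ be its supporting line and $n_e$ its inward unit normal. The wavefront $\mathcal{W}_{P,\delta}(t)$ is a time-dependent set of polygons with $\mathcal{W}_{P,\delta}(0)=P$. The set $e(t)$ of wavefront fragments of input edge $e$ at time $t$ lies on the line $\overline{e}+\max(0,t-\delta(e))\cdot n_e$ (stationary until time $\delta(e)$, then moving inwards self-parallel at unit speed); incidences are preserved, and wavefront vertices are intersections of supporting lines of incident wavefront edges. Events: edge events (a segment shrinks to zero length and is removed), split events (a reflex vertex reaches another part of the wavefront, which is split there), speed-change events (at time $\delta(e)$ fragments of $e$ start to move). The process ends when all wavefront polygons have collapsed. The face of $e$ is $f(e):=\bigcup_{t\ge 0}e(t)$. A set is monotone with respect to a line $\ell$ if every line perpendicular to $\ell$ intersects it in a connected set. *)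

theory Defs
  imports "HOL-Analysis.Analysis"
begin

type_synonym pt = "real \<times> real"

definition cyc_seg :: "pt list \<Rightarrow> nat \<Rightarrow> pt set" where
  "cyc_seg q i = closed_segment (q ! i) (q ! ((i + 1) mod length q))"

definition signed_area :: "pt list \<Rightarrow> real" where
  "signed_area q =
     (\<Sum>i<length q. fst (q ! i) * snd (q ! ((i + 1) mod length q))
                   - fst (q ! ((i + 1) mod length q)) * snd (q ! i)) / 2"

definition simple_polygon :: "pt list \<Rightarrow> bool" where
  "simple_polygon q \<longleftrightarrow> length q \<ge> 3 \<and> distinct q \<and>
     (\<forall>i<length q. \<forall>j<length q. i \<noteq> j \<longrightarrow>
        (if j = (i + 1) mod length q then cyc_seg q i \<inter> cyc_seg q j = {q ! j}
         else if i = (j + 1) mod length q then cyc_seg q i \<inter> cyc_seg q j = {q ! i}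
         else cyc_seg q i \<inter> cyc_seg q j = {}))"

section \<open>Input polygon P (counterclockwise vertex list vs; edge i goes from vs!i to vs!(i+1))\<close>

definition edir :: "pt list \<Rightarrow> nat \<Rightarrow> pt" where
  "edir vs i = vs ! ((i + 1) mod length vs) - vs ! i"

text \<open>Inward unit normal (interior lies to the left for a counterclockwise polygon).\<close>
definition inormal :: "pt list \<Rightarrow> nat \<Rightarrow> pt" where
  "inormal vs i = (1 / norm (edir vs i)) *\<^sub>R (- snd (edir vs i), fst (edir vs i))"

text \<open>Supporting line of the wavefront of edge e at time t: stationary until w e,
  then moving inwards at unit speed.\<close>
definition wline :: "pt list \<Rightarrow> (nat \<Rightarrow> real) \<Rightarrow> nat \<Rightarrow> real \<Rightarrow> pt set" where
  "wline vs w e t = {x. inner (x - vs ! e) (inormal vs e) = max 0 (t - w e)}"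

section \<open>Wavefront polygons: cyclic lists p of input-edge labels\<close>

definition wvert :: "pt list \<Rightarrow> (nat \<Rightarrow> real) \<Rightarrow> nat list \<Rightarrow> real \<Rightarrow> nat \<Rightarrow> pt" where
  "wvert vs w p t i = (THE x. x \<in> wline vs w (p ! i) t \<and> x \<in> wline vs w (p ! ((i + 1) mod length p)) t)"

definition wlines_meet :: "pt list \<Rightarrow> (nat \<Rightarrow> real) \<Rightarrow> nat list \<Rightarrow> real \<Rightarrow> bool" where
  "wlines_meet vs w p t \<longleftrightarrow> (\<forall>i<length p.
     \<exists>!x. x \<in> wline vs w (p ! i) t \<and> x \<in> wline vs w (p ! ((i + 1) mod length p)) t)"

definition wverts :: "pt list \<Rightarrow> (nat \<Rightarrow> real) \<Rightarrow> nat list \<Rightarrow> real \<Rightarrow> pt list" where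
  "wverts vs w p t = map (wvert vs w p t) [0..<length p]"

definition wseg :: "pt list \<Rightarrow> (nat \<Rightarrow> real) \<Rightarrow> nat list \<Rightarrow> real \<Rightarrow> nat \<Rightarrow> pt set" where
  "wseg vs w p t i = closed_segment (wvert vs w p t ((i + length p - 1) mod length p)) (wvert vs w p t i)"

definition wpoly_ok :: "pt list \<Rightarrow> (nat \<Rightarrow> real) \<Rightarrow> nat list \<Rightarrow> real \<Rightarrow> bool" where
  "wpoly_ok vs w p t \<longleftrightarrow> length p \<ge> 3 \<and> set p \<subseteq> {..<length vs} \<and>
     wlines_meet vs w p t \<and>
     simple_polygon (wverts vs w p t) \<and> signed_area (wverts vs w p t) > 0 \<and>
     (\<forall>i<length p. \<exists>c>0. wvert vs w p t i - wvert vs w p t ((i + length p - 1) mod length p)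
                          = c *\<^sub>R edir vs (p ! i))"

text \<open>Cyclic sublist p!a, p!(a+1), ..., p!b.\<close>
definition cyc_sub :: "nat list \<Rightarrow> nat \<Rightarrow> nat \<Rightarrow> nat list" where
  "cyc_sub p a b = map (\<lambda>k. p ! ((a + k) mod length p)) [0..<(b + length p - a) mod length p + 1]"

text \<open>A single event at time t transforming the wavefront (list of wavefront polygons) S into S':
  collapse of a polygon, edge event, or split event.\<close>
definition wevent :: "pt list \<Rightarrow> (nat \<Rightarrow> real) \<Rightarrow> real \<Rightarrow> nat list list \<Rightarrow> nat list list \<Rightarrow> bool" where
  "wevent vs w t S S' \<longleftrightarrow> (\<exists>A p B. S = A @ [p] @ B \<and> wlines_meet vs w p t \<and>
     ((signed_area (wverts vs w p t) = 0 \<and> S' = A @ B)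
      \<or> (\<exists>i<length p. length p \<ge> 4 \<and>
           wvert vs w p t ((i + length p - 1) mod length p) = wvert vs w p t i \<and>
           S' = A @ [take i p @ drop (Suc i) p] @ B)
      \<or> (\<exists>r<length p. \<exists>s<length p. s \<noteq> r \<and> s \<noteq> (r + 1) mod length p \<and>
           wvert vs w p t r \<in> wseg vs w p t s \<and>
           S' = A @ [cyc_sub p ((r + 1) mod length p) s, cyc_sub p s r] @ B)))"

definition wavefront_prop :: "pt list \<Rightarrow> (nat \<Rightarrow> real) \<Rightarrow> real list \<Rightarrow> nat list list list \<Rightarrow> bool" where
  "wavefront_prop vs w ts Ss \<longleftrightarrow>
     length ts = length Ss \<and> length ts \<ge> 2 \<and> ts ! 0 = 0 \<and> sorted_wrt (<) ts \<and>
     Ss ! 0 = [[0..<length vs]] \<and> last Ss = [] \<and>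
     (\<forall>j. j + 1 < length ts \<longrightarrow>
        (\<forall>t\<in>{ts ! j<..<ts ! (j + 1)}. \<forall>p\<in>set (Ss ! j). wpoly_ok vs w p t)) \<and>
     (\<forall>j. 0 < j \<and> j < length ts \<longrightarrow> (wevent vs w (ts ! j))\<^sup>*\<^sup>* (Ss ! (j - 1)) (Ss ! j))"

text \<open>Face f(e): union over all times of the wavefront fragments of e (closure adds event times).\<close>
definition wface :: "pt list \<Rightarrow> (nat \<Rightarrow> real) \<Rightarrow> real list \<Rightarrow> nat list list list \<Rightarrow> nat \<Rightarrow> pt set" where
  "wface vs w ts Ss e = closure
     (\<Union>j\<in>{j. j + 1 < length ts}. \<Union>t\<in>{ts ! j<..<ts ! (j + 1)}. \<Union>p\<in>set (Ss ! j).
        \<Union>i\<in>{i. i < length p \<and> p ! i = e}. wseg vs w p t i)"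

definition monotone_wrt :: "pt set \<Rightarrow> pt \<Rightarrow> bool" where
  "monotone_wrt S d \<longleftrightarrow> (\<forall>c. connected (S \<inter> {x. inner x d = c}))"

end

theory Submission
  imports Defs
begin



lemma seg_le:
  fixes P Q x n :: pt
  assumes "x \<in> closed_segment P Q"
  shows "inner x n \<le> max (inner P n) (inner Q n) \<and> inner x n \<ge> min (inner P n) (inner Q n)"
proof -
  obtain u where u: "0 \<le> u" "u \<le> 1" "x = (1 - u) *\<^sub>R P + u *\<^sub>R Q"
    using assms by (auto simp: in_segment)
  have e: "inner x n = (1 - u) * inner P n + u * inner Q n"
    using u by (simp add: inner_add_left)
  define M where "M = max (inner P n) (inner Q n)"
  define m where "m = min (inner P n) (inner Q n)"
  have "(1 - u) * inner P n \<le> (1 - u) * M" "u * inner Q n \<le> u * M"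
    using u by (auto intro!: mult_left_mono simp: M_def)
  moreover have "(1 - u) * inner P n \<ge> (1 - u) * m" "u * inner Q n \<ge> u * m"
    using u by (auto intro!: mult_left_mono simp: m_def)
  ultimately show ?thesis unfolding e M_def[symmetric] m_def[symmetric] by (auto simp: algebra_simps)
qed

lemma seg_disj:
  fixes P Q R S n :: pt
  assumes "inner P n < k" "inner Q n < k" "inner R n > k" "inner S n > k"
  shows "closed_segment P Q \<inter> closed_segment R S = {}"
proof (rule ccontr)
  assume "closed_segment P Q \<inter> closed_segment R S \<noteq> {}"
  then obtain x where "x \<in> closed_segment P Q" "x \<in> closed_segment R S" by auto
  from seg_le[OF this(1), of n] seg_le[OF this(2), of n] assms show False by auto
qed

lemma seg_adj:
  fixes P Q R n :: pt
  assumes "inner (R - Q) n = 0" "inner (P - Q) n \<noteq> 0"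
  shows "closed_segment P Q \<inter> closed_segment Q R = {Q}"
proof
  show "{Q} \<subseteq> closed_segment P Q \<inter> closed_segment Q R" by auto
  show "closed_segment P Q \<inter> closed_segment Q R \<subseteq> {Q}"
  proof
    fix x assume x: "x \<in> closed_segment P Q \<inter> closed_segment Q R"
    obtain u where u: "0 \<le> u" "u \<le> 1" "x = (1 - u) *\<^sub>R P + u *\<^sub>R Q"
      using x by (auto simp: in_segment)
    obtain v where v: "0 \<le> v" "v \<le> 1" "x = (1 - v) *\<^sub>R Q + v *\<^sub>R R"
      using x by (auto simp: in_segment)
    have "x - Q = (1 - u) *\<^sub>R (P - Q)" using u by (simp add: algebra_simps)
    moreover have "x - Q = v *\<^sub>R (R - Q)" using v by (simp add: algebra_simps)
    ultimately have "(1 - u) * inner (P - Q) n = v * inner (R - Q) n"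
      by (metis inner_scaleR_left)
    with assms have "1 - u = 0" by simp
    with u show "x \<in> {Q}" by simp
  qed
qed

lemma simple5:
  assumes "distinct [q0, q1, q2, q3, q4]"
    and a1: "closed_segment q0 q1 \<inter> closed_segment q1 q2 = {q1}"
    and a2: "closed_segment q1 q2 \<inter> closed_segment q2 q3 = {q2}"
    and a3: "closed_segment q2 q3 \<inter> closed_segment q3 q4 = {q3}"
    and a4: "closed_segment q3 q4 \<inter> closed_segment q4 q0 = {q4}"
    and a5: "closed_segment q4 q0 \<inter> closed_segment q0 q1 = {q0}"
    and d1: "closed_segment q0 q1 \<inter> closed_segment q2 q3 = {}"
    and d2: "closed_segment q0 q1 \<inter> closed_segment q3 q4 = {}"
    and d3: "closed_segment q1 q2 \<inter> closed_segment q3 q4 = {}"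
    and d4: "closed_segment q1 q2 \<inter> closed_segment q4 q0 = {}"
    and d5: "closed_segment q2 q3 \<inter> closed_segment q4 q0 = {}"
  shows "simple_polygon [q0, q1, q2, q3, q4]"
proof -
  define q where "q = [q0, q1, q2, q3, q4]"
  have cs: "cyc_seg q 0 = closed_segment q0 q1" "cyc_seg q 1 = closed_segment q1 q2"
    "cyc_seg q 2 = closed_segment q2 q3" "cyc_seg q 3 = closed_segment q3 q4"
    "cyc_seg q 4 = closed_segment q4 q0" by (simp_all add: cyc_seg_def q_def)
  have c: "cyc_seg q 0 \<inter> cyc_seg q 1 = {q1}" "cyc_seg q 1 \<inter> cyc_seg q 2 = {q2}"
    "cyc_seg q 2 \<inter> cyc_seg q 3 = {q3}" "cyc_seg q 3 \<inter> cyc_seg q 4 = {q4}"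
    "cyc_seg q 4 \<inter> cyc_seg q 0 = {q0}"
    "cyc_seg q 0 \<inter> cyc_seg q 2 = {}" "cyc_seg q 0 \<inter> cyc_seg q 3 = {}"
    "cyc_seg q 1 \<inter> cyc_seg q 3 = {}" "cyc_seg q 1 \<inter> cyc_seg q 4 = {}"
    "cyc_seg q 2 \<inter> cyc_seg q 4 = {}"
    unfolding cs using a1 a2 a3 a4 a5 d1 d2 d3 d4 d5 by simp_all
  have cc: "cyc_seg q 1 \<inter> cyc_seg q 0 = {q1}" "cyc_seg q 2 \<inter> cyc_seg q 1 = {q2}"
    "cyc_seg q 3 \<inter> cyc_seg q 2 = {q3}" "cyc_seg q 4 \<inter> cyc_seg q 3 = {q4}"
    "cyc_seg q 0 \<inter> cyc_seg q 4 = {q0}"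
    "cyc_seg q 2 \<inter> cyc_seg q 0 = {}" "cyc_seg q 3 \<inter> cyc_seg q 0 = {}"
    "cyc_seg q 3 \<inter> cyc_seg q 1 = {}" "cyc_seg q 4 \<inter> cyc_seg q 1 = {}"
    "cyc_seg q 4 \<inter> cyc_seg q 2 = {}"
    using c by (simp_all add: Int_commute)
  have i5: "\<And>i::nat. i < 5 \<Longrightarrow> i = 0 \<or> i = 1 \<or> i = 2 \<or> i = 3 \<or> i = 4" by linarith
  have len: "length q = 5" by (simp add: q_def)
  have "\<forall>i<length q. \<forall>j<length q. i \<noteq> j \<longrightarrow>
        (if j = (i + 1) mod length q then cyc_seg q i \<inter> cyc_seg q j = {q ! j}
         else if i = (j + 1) mod length q then cyc_seg q i \<inter> cyc_seg q j = {q ! i}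
         else cyc_seg q i \<inter> cyc_seg q j = {})"
  proof (intro allI impI)
    fix i j assume i: "i < length q" and j: "j < length q" and ij: "i \<noteq> j"
    from i j have "i = 0 \<or> i = 1 \<or> i = 2 \<or> i = 3 \<or> i = 4" "j = 0 \<or> j = 1 \<or> j = 2 \<or> j = 3 \<or> j = 4"
      using i5 len by auto
    then show "if j = (i + 1) mod length q then cyc_seg q i \<inter> cyc_seg q j = {q ! j}
         else if i = (j + 1) mod length q then cyc_seg q i \<inter> cyc_seg q j = {q ! i}
         else cyc_seg q i \<inter> cyc_seg q j = {}"
      using ij by (elim disjE) (simp_all add: len c cc c[unfolded One_nat_def] cc[unfolded One_nat_def], simp_all add: q_def)
  qed
  then show ?thesis using assms(1) len unfolding simple_polygon_def q_def[symmetric] by simp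
qed


definition vs0 :: "pt list" where "vs0 = [(0,0),(4,0),(7,-4),(7,11),(0,11)]"
definition w0 :: "nat \<Rightarrow> real" where "w0 = (\<lambda>i. if i = 0 then 0 else if i = 1 then 2 else 20)"
definition P0 :: "nat list" where "P0 = [0,1,2,3,4]"

lemma sq25: "sqrt 25 = 5" by (rule real_sqrt_unique) auto

lemma edirs: "edir vs0 0 = (4,0)" "edir vs0 1 = (3,-4)" "edir vs0 2 = (0,15)" "edir vs0 3 = (-7,0)" "edir vs0 4 = (0,-11)"
  by (simp_all add: edir_def vs0_def)

lemma inormals: "inormal vs0 0 = (0,1)" "inormal vs0 1 = (4/5,3/5)" "inormal vs0 2 = (-1,0)" "inormal vs0 3 = (0,-1)" "inormal vs0 4 = (1,0)"
  by (unfold inormal_def edirs; simp add: sq25 norm_Pair)+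

lemma wlines:
  assumes "0 \<le> t" "t \<le> 20"
  shows "wline vs0 w0 0 t = {x. snd x = t}"
    "wline vs0 w0 1 t = {x. 4 * fst x + 3 * snd x = 16 + 5 * max 0 (t - 2)}"
    "wline vs0 w0 2 t = {x. fst x = 7}"
    "wline vs0 w0 3 t = {x. snd x = 11}"
    "wline vs0 w0 4 t = {x. fst x = 0}"
  using assms unfolding wline_def inormals
  by (auto simp: w0_def vs0_def field_simps)

lemma wline1': "0 \<le> t \<Longrightarrow> t \<le> 20 \<Longrightarrow> wline vs0 w0 (Suc 0) t = {x. 4 * fst x + 3 * snd x = 16 + 5 * max 0 (t - 2)}"
  using wlines(2) by simp

definition av :: "real \<Rightarrow> real" where "av t = (16 + 5 * max 0 (t - 2) - 3 * t) / 4"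
definition bv :: "real \<Rightarrow> real" where "bv t = (5 * max 0 (t - 2) - 12) / 3"

definition vt :: "real \<Rightarrow> nat \<Rightarrow> pt" where
  "vt t i = [(av t, t), (7, bv t), (7, 11), (0, 11), (0, t)] ! i"

lemma meet_iff:
  assumes "0 \<le> t" "t \<le> 20" "i < 5"
  shows "(x \<in> wline vs0 w0 (P0 ! i) t \<and> x \<in> wline vs0 w0 (P0 ! ((i + 1) mod length P0)) t) \<longleftrightarrow> x = vt t i"
proof -
  have "i = 0 \<or> i = 1 \<or> i = 2 \<or> i = 3 \<or> i = 4" using assms by linarith
  then show ?thesis using assms
    by (cases x) (auto simp: wlines wline1' P0_def vt_def av_def bv_def field_simps)
qed

lemma meet: "0 \<le> t \<Longrightarrow> t \<le> 20 \<Longrightarrow> wlines_meet vs0 w0 P0 t"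
  unfolding wlines_meet_def using meet_iff by (auto simp: P0_def)

lemma wvert_eq: "0 \<le> t \<Longrightarrow> t \<le> 20 \<Longrightarrow> i < 5 \<Longrightarrow> wvert vs0 w0 P0 t i = vt t i"
  unfolding wvert_def using meet_iff by simp



lemma simple_gen:
  fixes a b t :: real
  assumes "0 < a" "a < 7" "0 < t" "t < 11" "b < t"
  shows "simple_polygon [(a,t),(7,b),(7,11),(0,11),(0,t)]"
proof (rule simple5)
  show "distinct [(a,t),(7,b),(7,11),(0,11),(0,t)]" using assms by auto
  show "(closed_segment (a, t) (7, b) :: pt set) \<inter> closed_segment (7, b) (7, 11) = {(7, b)}"
    by (rule seg_adj[where n="(1,0)"]) (use assms in auto)
  show "(closed_segment (7, b) (7, 11) :: pt set) \<inter> closed_segment (7, 11) (0, 11) = {(7, 11)}"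
    by (rule seg_adj[where n="(0,1)"]) (use assms in auto)
  show "(closed_segment (7, 11) (0, 11) :: pt set) \<inter> closed_segment (0, 11) (0, t) = {(0, 11)}"
    by (rule seg_adj[where n="(1,0)"]) (use assms in auto)
  show "(closed_segment (0, 11) (0, t) :: pt set) \<inter> closed_segment (0, t) (a, t) = {(0, t)}"
    by (rule seg_adj[where n="(0,1)"]) (use assms in auto)
  show "(closed_segment (0, t) (a, t) :: pt set) \<inter> closed_segment (a, t) (7, b) = {(a, t)}"
    by (rule seg_adj[where n="(t - b, 7 - a)"]) (use assms in \<open>auto simp: algebra_simps\<close>)
  show "(closed_segment (a, t) (7, b) :: pt set) \<inter> closed_segment (7, 11) (0, 11) = {}"
    by (rule seg_disj[where n="(0,1)" and k="(t+11)/2"]) (use assms in auto)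
  show "(closed_segment (a, t) (7, b) :: pt set) \<inter> closed_segment (0, 11) (0, t) = {}"
    by (rule seg_disj[where n="(-1,0)" and k="-a/2"]) (use assms in auto)
  show "(closed_segment (7, b) (7, 11) :: pt set) \<inter> closed_segment (0, 11) (0, t) = {}"
    by (rule seg_disj[where n="(-1,0)" and k="-1"]) (use assms in auto)
  show "(closed_segment (7, b) (7, 11) :: pt set) \<inter> closed_segment (0, t) (a, t) = {}"
    by (rule seg_disj[where n="(-1,0)" and k="-(7+a)/2"]) (use assms in auto)
  show "(closed_segment (7, 11) (0, 11) :: pt set) \<inter> closed_segment (0, t) (a, t) = {}"
    by (rule seg_disj[where n="(0,-1)" and k="-(11+t)/2"]) (use assms in auto)
qed

lemma wverts_eq: "0 \<le> t \<Longrightarrow> t \<le> 20 \<Longrightarrow>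
  wverts vs0 w0 P0 t = [(av t,t),(7,bv t),(7,11),(0,11),(0,t)]"
proof -
  assume "0 \<le> t" "t \<le> 20"
  have u: "[0..<length P0] = [0,1,2,3,4]" by (simp add: P0_def upt_rec)
  show ?thesis unfolding wverts_def u using \<open>0 \<le> t\<close> \<open>t \<le> 20\<close>
    by (simp only: list.map wvert_eq) (simp add: vt_def)
qed

lemma bounds: "0 < t \<Longrightarrow> t < 11 \<Longrightarrow> 0 < av t \<and> av t < 7 \<and> bv t < t"
  by (auto simp: av_def bv_def max_def)

lemma area5: "signed_area [(a,t),(7,b),(7,11),(0,11),(0,t)] = (154 - 7*t - a*t - 7*b + a*b) / 2"
proof -
  have l: "{..<length [(a,t),(7::real,b),(7,11),(0,11),(0,t)]} = {0,1,2,3,4}" by auto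
  show ?thesis unfolding signed_area_def l by (simp add: algebra_simps)
qed


lemma area_pos: "0 < t \<Longrightarrow> t < 11 \<Longrightarrow> signed_area (wverts vs0 w0 P0 t) > 0"
proof -
  assume t: "0 < t" "t < 11"
  have "154 - 7*t - av t*t - 7*bv t + av t*bv t > 0"
  proof (cases "t \<le> 2")
    case True
    then have m: "max 0 (t - 2) = 0" by simp
    have e: "154 - 7*t - av t*t - 7*bv t + av t*bv t = 166 - 8*t + 3/4*(t*t)"
      by (simp add: av_def bv_def m field_simps)
    have "t * t \<ge> 0" by simp
    then show ?thesis unfolding e using True by linarith
  next
    case False
    then have m: "max 0 (t - 2) = t - 2" by simp
    have e: "154 - 7*t - av t*t - 7*bv t + av t*bv t = (11 - t) * (106 - 2*t) / 6"
      by (simp add: av_def bv_def m field_simps)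
    have "(11 - t) * (106 - 2*t) > 0" using t by (intro mult_pos_pos) auto
    then show ?thesis unfolding e by simp
  qed
  then show ?thesis using t by (simp add: wverts_eq area5)
qed

lemma P0_nth: "P0 ! 0 = 0" "P0 ! 1 = 1" "P0 ! 2 = 2" "P0 ! 3 = 3" "P0 ! 4 = 4" "length P0 = 5"
  by (simp_all add: P0_def)

lemma wpoly: "0 < t \<Longrightarrow> t < 11 \<Longrightarrow> wpoly_ok vs0 w0 P0 t"
proof -
  assume t: "0 < t" "t < 11"
  have len: "length P0 = 5" by (simp add: P0_def)
  have dirs: "\<exists>c>0. wvert vs0 w0 P0 t i - wvert vs0 w0 P0 t ((i + length P0 - 1) mod length P0)
                          = c *\<^sub>R edir vs0 (P0 ! i)" if i: "i < length P0" for i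
  proof -
    have b: "0 < av t" "av t < 7" "bv t < t" using bounds t by auto
    have rel: "bv t - t = -4 * (7 - av t) / 3" by (auto simp: av_def bv_def max_def field_simps)
    from i len have "i = 0 \<or> i = 1 \<or> i = 2 \<or> i = 3 \<or> i = 4" by linarith
    then show ?thesis
    proof (elim disjE)
      assume "i = 0" then show ?thesis using t b
        by (intro exI[of _ "av t / 4"]) (simp add: len wvert_eq vt_def P0_nth edirs P0_nth[unfolded One_nat_def] edirs[unfolded One_nat_def] field_simps)
    next
      assume "i = 1" then show ?thesis using t b rel
        by (intro exI[of _ "(7 - av t) / 3"]) (simp add: len wvert_eq vt_def P0_nth edirs P0_nth[unfolded One_nat_def] edirs[unfolded One_nat_def] field_simps)
    next
      assume "i = 2" then show ?thesis using t b
        by (intro exI[of _ "(11 - bv t) / 15"]) (simp add: len wvert_eq vt_def P0_nth edirs P0_nth[unfolded One_nat_def] edirs[unfolded One_nat_def] field_simps)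
    next
      assume "i = 3" then show ?thesis using t b
        by (intro exI[of _ "1"]) (simp add: len wvert_eq vt_def P0_nth edirs P0_nth[unfolded One_nat_def] edirs[unfolded One_nat_def] field_simps)
    next
      assume "i = 4" then show ?thesis using t b
        by (intro exI[of _ "(11 - t) / 11"]) (simp add: len wvert_eq vt_def P0_nth edirs P0_nth[unfolded One_nat_def] edirs[unfolded One_nat_def] field_simps)
    qed
  qed
  show ?thesis unfolding wpoly_ok_def
  proof (intro conjI)
    show "3 \<le> length P0" by (simp add: len)
    show "set P0 \<subseteq> {..<length vs0}" by (auto simp: P0_def vs0_def)
    show "wlines_meet vs0 w0 P0 t" using meet t by simp
    show "simple_polygon (wverts vs0 w0 P0 t)" using t bounds[OF t] by (simp add: wverts_eq simple_gen)
    show "signed_area (wverts vs0 w0 P0 t) > 0" using area_pos t by simp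
    show "\<forall>i<length P0. \<exists>c>0. wvert vs0 w0 P0 t i - wvert vs0 w0 P0 t ((i + length P0 - 1) mod length P0)
                          = c *\<^sub>R edir vs0 (P0 ! i)" using dirs by blast
  qed
qed

lemma event11: "wevent vs0 w0 11 [P0] []"
  unfolding wevent_def
  apply (rule exI[of _ "[]"], rule exI[of _ P0], rule exI[of _ "[]"])
  using meet[of 11] by (simp add: wverts_eq area5 av_def bv_def)

lemma prop_ex: "wavefront_prop vs0 w0 [0, 11] [[P0], []]"
  unfolding wavefront_prop_def
proof (intro conjI allI impI)
  show "[[P0], []] ! 0 = [[0..<length vs0]]" by (simp add: P0_def vs0_def upt_rec)
  fix j assume "j + 1 < length [0::real, 11]"
  then have j: "j = 0" by simp
  show "\<forall>t\<in>{[0::real, 11] ! j<..<[0, 11] ! (j + 1)}. \<forall>p\<in>set ([[P0], []] ! j). wpoly_ok vs0 w0 p t"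
    using wpoly by (simp add: j)
next
  fix j assume "0 < j \<and> j < length [0::real, 11]"
  then have j: "j = 1" by simp
  show "(wevent vs0 w0 ([0, 11] ! j))\<^sup>*\<^sup>* ([[P0], []] ! (j - 1)) ([[P0], []] ! j)"
    using event11 by (simp add: j)
qed auto


lemma vert_in_seg:
  assumes sp: "simple_polygon q" and r: "r < length q" and k: "k < length q"
    and x: "q ! r \<in> cyc_seg q k"
  shows "k = r \<or> r = (k + 1) mod length q"
proof (rule ccontr)
  assume c: "\<not> (k = r \<or> r = (k + 1) mod length q)"
  have d: "distinct q" using sp by (simp add: simple_polygon_def)
  have rin: "q ! r \<in> cyc_seg q r" by (simp add: cyc_seg_def)
  from sp r k c have h: "if k = (r + 1) mod length q then cyc_seg q r \<inter> cyc_seg q k = {q ! k}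
         else if r = (k + 1) mod length q then cyc_seg q r \<inter> cyc_seg q k = {q ! r}
         else cyc_seg q r \<inter> cyc_seg q k = {}"
    unfolding simple_polygon_def by metis
  show False
  proof (cases "k = (r + 1) mod length q")
    case True
    with h x rin have "q ! r = q ! k" by auto
    with d r k c show False by (simp add: nth_eq_iff_index_eq)
  next
    case False
    with h c x rin show False by auto
  qed
qed

lemma no_event:
  assumes "0 < \<tau>" "\<tau> < 11"
  shows "\<not> wevent vs0 w0 \<tau> [P0] S'"
proof
  assume "wevent vs0 w0 \<tau> [P0] S'"
  then obtain A p B where S: "[P0] = A @ [p] @ B" and ev:
     "(signed_area (wverts vs0 w0 p \<tau>) = 0 \<and> S' = A @ B)
      \<or> (\<exists>i<length p. length p \<ge> 4 \<and>
           wvert vs0 w0 p \<tau> ((i + length p - 1) mod length p) = wvert vs0 w0 p \<tau> i \<and>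
           S' = A @ [take i p @ drop (Suc i) p] @ B)
      \<or> (\<exists>r<length p. \<exists>s<length p. s \<noteq> r \<and> s \<noteq> (r + 1) mod length p \<and>
           wvert vs0 w0 p \<tau> r \<in> wseg vs0 w0 p \<tau> s \<and>
           S' = A @ [cyc_sub p ((r + 1) mod length p) s, cyc_sub p s r] @ B)"
    unfolding wevent_def by blast
  from S have p: "p = P0" by (cases A) auto
  have ok: "wpoly_ok vs0 w0 P0 \<tau>" using wpoly assms by simp
  have t20: "0 \<le> \<tau>" "\<tau> \<le> 20" using assms by auto
  have b: "0 < av \<tau>" "av \<tau> < 7" "bv \<tau> < \<tau>" using bounds assms by auto
  have wvn: "wverts vs0 w0 P0 \<tau> ! k = wvert vs0 w0 P0 \<tau> k" if "k < 5" for k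
    using that by (simp add: wverts_def P0_nth)
  have lw: "length (wverts vs0 w0 P0 \<tau>) = 5" by (simp add: wverts_def P0_nth)
  have sp: "simple_polygon (wverts vs0 w0 P0 \<tau>)" using ok by (simp add: wpoly_ok_def)
  from ev show False unfolding p
  proof (elim disjE exE conjE)
    assume "signed_area (wverts vs0 w0 P0 \<tau>) = 0"
    with ok show False by (simp add: wpoly_ok_def)
  next
    fix i assume i: "i < length P0" and e: "wvert vs0 w0 P0 \<tau> ((i + length P0 - 1) mod length P0) = wvert vs0 w0 P0 \<tau> i"
    from i have "i = 0 \<or> i = 1 \<or> i = 2 \<or> i = 3 \<or> i = 4" by (simp add: P0_nth) linarith
    with e b t20 assms show False by (auto simp: P0_nth wvert_eq vt_def)
  next
    fix r s assume r: "r < length P0" and s: "s < length P0" and sr: "s \<noteq> r" "s \<noteq> (r + 1) mod length P0"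
      and x: "wvert vs0 w0 P0 \<tau> r \<in> wseg vs0 w0 P0 \<tau> s"
    define k where "k = (s + 4) mod 5"
    have k5: "k < 5" by (simp add: k_def)
    have sk: "s = (k + 1) mod 5" using s by (simp add: k_def P0_nth mod_Suc_eq)
    have "wseg vs0 w0 P0 \<tau> s = cyc_seg (wverts vs0 w0 P0 \<tau>) k"
    proof -
      have e1: "(s + length P0 - 1) mod length P0 = k" by (simp add: P0_nth k_def add.commute)
      have e2: "(k + 1) mod length (wverts vs0 w0 P0 \<tau>) = s" using sk lw by simp
      have s5: "s < 5" using s by (simp add: P0_nth)
      show ?thesis unfolding wseg_def cyc_seg_def e1 e2 wvn[OF k5] wvn[OF s5] ..
    qed
    with x have "wverts vs0 w0 P0 \<tau> ! r \<in> cyc_seg (wverts vs0 w0 P0 \<tau>) k"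
      using r by (simp add: wvn P0_nth)
    from vert_in_seg[OF sp _ _ this] r k5 lw have "k = r \<or> r = (k + 1) mod 5" by (simp add: P0_nth)
    with sk sr show False by (auto simp: P0_nth)
  qed
qed


lemma state_P0:
  assumes wp: "wavefront_prop vs0 w0 ts Ss"
  shows "j < length ts \<Longrightarrow> ts ! j < 11 \<Longrightarrow> Ss ! j = [P0]"
proof (induction j)
  case 0
  from wp show ?case by (simp add: wavefront_prop_def P0_def vs0_def upt_rec)
next
  case (Suc j)
  have sorted: "sorted_wrt (<) ts" and t0: "ts ! 0 = 0" using wp by (auto simp: wavefront_prop_def)
  have lt: "ts ! j < ts ! Suc j" using sorted_wrt_nth_less[OF sorted, of j "Suc j"] Suc.prems by simp
  have pos: "0 < ts ! Suc j" using sorted_wrt_nth_less[OF sorted, of 0 "Suc j"] Suc.prems t0 by simp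
  have IH: "Ss ! j = [P0]" using Suc lt by simp
  have "(wevent vs0 w0 (ts ! Suc j))\<^sup>*\<^sup>* (Ss ! (Suc j - 1)) (Ss ! Suc j)"
    using wp Suc.prems unfolding wavefront_prop_def by blast
  then have r: "(wevent vs0 w0 (ts ! Suc j))\<^sup>*\<^sup>* [P0] (Ss ! Suc j)" using IH by simp
  show ?case
  proof (rule converse_rtranclpE[OF r])
    show "[P0] = Ss ! Suc j \<Longrightarrow> Ss ! Suc j = [P0]" by simp
  next
    fix y assume "wevent vs0 w0 (ts ! Suc j) [P0] y"
    with no_event[OF pos] Suc.prems show "Ss ! Suc j = [P0]" by simp
  qed
qed

lemma last_big:
  assumes wp: "wavefront_prop vs0 w0 ts Ss"
  shows "ts ! (length ts - 1) \<ge> 11"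
proof (rule ccontr)
  assume "\<not> ts ! (length ts - 1) \<ge> 11"
  then have "Ss ! (length ts - 1) = [P0]" using state_P0[OF wp, of "length ts - 1"] wp
    by (auto simp: wavefront_prop_def)
  moreover have "Ss ! (length ts - 1) = []"
  proof -
    have l: "length ts = length Ss" "length Ss \<ge> 2" "last Ss = []" using wp by (auto simp: wavefront_prop_def)
    then have "Ss \<noteq> []" by auto
    with l show ?thesis by (metis last_conv_nth)
  qed
  ultimately show False by simp
qed

lemma find_interval:
  fixes ts :: "real list"
  assumes "sorted_wrt (<) ts" "ts \<noteq> []" "ts ! 0 = 0" "0 < t" "t \<notin> set ts" "t < ts ! (length ts - 1)"
  shows "\<exists>j. j + 1 < length ts \<and> ts ! j < t \<and> t < ts ! (j + 1)"
proof -
  define k where "k = (LEAST k. t < ts ! k)"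
  have tk: "t < ts ! k" unfolding k_def by (rule LeastI[of _ "length ts - 1"]) (use assms in auto)
  have kle: "k \<le> length ts - 1" unfolding k_def by (rule Least_le) (use assms in auto)
  have k0: "k \<noteq> 0"
  proof
    assume "k = 0" with tk assms show False by simp
  qed
  have "\<not> t < ts ! (k - 1)" unfolding k_def by (rule not_less_Least) (use k0 k_def in auto)
  moreover have "ts ! (k - 1) \<noteq> t" using assms kle k0 by (metis diff_le_self le_less_trans nth_mem not_less_eq_eq Suc_pred' assms(2) length_greater_0_conv not_gr_zero le_imp_less_Suc)
  ultimately have "ts ! (k - 1) < t" by simp
  with tk k0 kle assms(2) show ?thesis by (intro exI[of _ "k - 1"]) auto
qed

lemma seg_line:
  fixes a b x m v :: pt
  assumes "x \<in> closed_segment a b" "inner (a - v) m = c" "inner (b - v) m = c"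
  shows "inner (x - v) m = c"
  using seg_le[OF assms(1), of m] assms(2,3) by (auto simp: inner_diff_left)

lemma wseg_line:
  assumes "wlines_meet vs w p t" "i < length p"
  shows "wseg vs w p t i \<subseteq> wline vs w (p ! i) t"
proof -
  let ?n = "length p"
  have n: "?n > 0" using assms by auto
  have vin: "wvert vs w p t k \<in> wline vs w (p ! k) t \<and> wvert vs w p t k \<in> wline vs w (p ! ((k + 1) mod ?n)) t"
    if "k < ?n" for k
    using theI'[OF assms(1)[unfolded wlines_meet_def, rule_format, OF that]] unfolding wvert_def .
  define k where "k = (i + ?n - 1) mod ?n"
  have k: "k < ?n" using n by (simp add: k_def)
  have "(k + 1) mod ?n = (i + ?n - 1 + 1) mod ?n" unfolding k_def by (simp add: mod_Suc_eq)
  also have "\<dots> = i" using n assms(2) by simp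
  finally have ki: "(k + 1) mod ?n = i" .
  have a: "wvert vs w p t k \<in> wline vs w (p ! i) t" using vin[OF k] ki by simp
  have b: "wvert vs w p t i \<in> wline vs w (p ! i) t" using vin[OF assms(2)] by simp
  show ?thesis
  proof
    fix x assume "x \<in> wseg vs w p t i"
    then have "x \<in> closed_segment (wvert vs w p t k) (wvert vs w p t i)" by (simp add: wseg_def k_def)
    from seg_line[OF this] a b show "x \<in> wline vs w (p ! i) t" by (simp add: wline_def)
  qed
qed

lemma wline0: "0 \<le> t \<Longrightarrow> wline vs0 w0 0 t = {x. snd x = t}"
  unfolding wline_def inormals by (auto simp: w0_def vs0_def)


lemma wseg0: "0 < t \<Longrightarrow> t < 11 \<Longrightarrow> wseg vs0 w0 P0 t 0 = closed_segment (0, t) (av t, t)"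
  by (simp add: wseg_def P0_nth wvert_eq vt_def)

lemma in_face:
  assumes wp: "wavefront_prop vs0 w0 ts Ss" and t: "0 < t" "t < 11" "t \<notin> set ts"
    and x: "0 \<le> x" "x \<le> av t"
  shows "(x, t) \<in> wface vs0 w0 ts Ss 0"
proof -
  have props: "sorted_wrt (<) ts" "ts \<noteq> []" "ts ! 0 = 0" using wp by (auto simp: wavefront_prop_def)
  obtain j where j: "j + 1 < length ts" "ts ! j < t" "t < ts ! (j + 1)"
    using find_interval[OF props t(1) t(3)] last_big[OF wp] t by fastforce
  have S: "Ss ! j = [P0]" using state_P0[OF wp, of j] j t by simp
  have b: "0 < av t" using bounds t by auto
  have "(x, t) \<in> closed_segment (0, t) (av t, t)"
    unfolding in_segment using b x
    by (intro exI[of _ "x / av t"]) (auto simp: field_simps)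
  then have "(x, t) \<in> wseg vs0 w0 P0 t 0" using wseg0 t by simp
  then have "(x, t) \<in> (\<Union>j\<in>{j. j + 1 < length ts}. \<Union>t\<in>{ts ! j<..<ts ! (j + 1)}. \<Union>p\<in>set (Ss ! j).
        \<Union>i\<in>{i. i < length p \<and> p ! i = 0}. wseg vs0 w0 p t i)"
  proof -
    have m1: "j \<in> {j. j + 1 < length ts}" "t \<in> {ts ! j<..<ts ! (j + 1)}" "P0 \<in> set (Ss ! j)"
      "0 \<in> {i. i < length P0 \<and> P0 ! i = 0}" using j S by (auto simp: P0_nth)
    show ?thesis
      by (rule UN_I[OF m1(1)], rule UN_I[OF m1(2)], rule UN_I[OF m1(3)], rule UN_I[OF m1(4)]) fact
  qed
  then show ?thesis unfolding wface_def by (rule subsetD[OF closure_subset])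
qed

lemma gap:
  assumes wp: "wavefront_prop vs0 w0 ts Ss"
  shows "(3, 2) \<notin> wface vs0 w0 ts Ss 0"
proof
  assume "(3, 2) \<in> wface vs0 w0 ts Ss 0"
  then obtain y where y: "y \<in> (\<Union>j\<in>{j. j + 1 < length ts}. \<Union>t\<in>{ts ! j<..<ts ! (j + 1)}. \<Union>p\<in>set (Ss ! j).
        \<Union>i\<in>{i. i < length p \<and> p ! i = 0}. wseg vs0 w0 p t i)" and d: "dist y (3, 2) < 1/4"
    unfolding wface_def closure_approachable by (meson zero_less_divide_1_iff zero_less_numeral)
  then obtain j t p i where j: "j + 1 < length ts" and t: "ts ! j < t" "t < ts ! (j + 1)"
    and p: "p \<in> set (Ss ! j)" and i: "i < length p" "p ! i = 0" and ys: "y \<in> wseg vs0 w0 p t i"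
    by auto
  have props: "sorted_wrt (<) ts" "ts ! 0 = 0" using wp by (auto simp: wavefront_prop_def)
  have tj0: "ts ! j \<ge> 0"
  proof (cases j)
    case 0 then show ?thesis using props by simp
  next
    case (Suc k)
    then show ?thesis using sorted_wrt_nth_less[OF props(1), of 0 j] j props by simp
  qed
  have ok: "wpoly_ok vs0 w0 p t" using wp j t p unfolding wavefront_prop_def by auto
  then have "y \<in> wline vs0 w0 0 t" using wseg_line[of vs0 w0 p t i] ys i by (auto simp: wpoly_ok_def)
  then have yt: "snd y = t" using wline0[of t] t tj0 by auto
  have "dist (snd y) 2 < 1/4" using dist_snd_le[of y "(3,2)"] d by simp
  then have "\<bar>t - 2\<bar> < 1/4" using yt by (simp add: dist_real_def)
  then have t2: "7/4 < t" "t < 9/4" unfolding abs_less_iff by linarith+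
  have "dist (fst y) 3 < 1/4" using dist_fst_le[of y "(3,2)"] d by simp
  then have "\<bar>fst y - 3\<bar> < 1/4" by (simp add: dist_real_def)
  then have y3: "fst y > 11/4" unfolding abs_less_iff by linarith
  have S: "Ss ! j = [P0]" using state_P0[OF wp, of j] j t t2 by simp
  with p have pP: "p = P0" by simp
  with i have i0: "i = 0" by (auto simp: P0_def nth_Cons split: nat.splits)
  have "y \<in> closed_segment (0, t) (av t, t)" using ys pP i0 wseg0[of t] t2 by simp
  from seg_le[OF this, of "(1,0)"] have "fst y \<le> max 0 (av t)" by (cases y) simp
  moreover have "av t < 11/4" using t2 by (auto simp: av_def max_def)
  moreover have "0 < av t" using bounds[of t] t2 by simp
  ultimately show False using y3 by simp
qed

lemma avoid_finite:
  fixes a b :: real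
  assumes "a < b" "finite A"
  obtains t where "a < t" "t < b" "t \<notin> A"
proof -
  have "infinite {a<..<b}" using assms by simp
  then have "{a<..<b} - A \<noteq> {}" using assms(2) by (metis Diff_empty Diff_infinite_finite finite.emptyI)
  then obtain t where "t \<in> {a<..<b} - A" by blast
  then show ?thesis using that by auto
qed

lemma vs0_simple: "simple_polygon vs0"
  unfolding vs0_def
proof (rule simple5)
  show "distinct [(0::real,0::real),(4,0),(7,-4),(7,11),(0,11)]" by auto
  show "(closed_segment (0, 0) (4, 0) :: pt set) \<inter> closed_segment (4, 0) (7, - 4) = {(4, 0)}"
    by (rule seg_adj[where n="(4,3)"]) auto
  show "(closed_segment (4, 0) (7, - 4) :: pt set) \<inter> closed_segment (7, - 4) (7, 11) = {(7, - 4)}"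
    by (rule seg_adj[where n="(1,0)"]) auto
  show "(closed_segment (7, - 4) (7, 11) :: pt set) \<inter> closed_segment (7, 11) (0, 11) = {(7, 11)}"
    by (rule seg_adj[where n="(0,1)"]) auto
  show "(closed_segment (7, 11) (0, 11) :: pt set) \<inter> closed_segment (0, 11) (0, 0) = {(0, 11)}"
    by (rule seg_adj[where n="(1,0)"]) auto
  show "(closed_segment (0, 11) (0, 0) :: pt set) \<inter> closed_segment (0, 0) (4, 0) = {(0, 0)}"
    by (rule seg_adj[where n="(0,1)"]) auto
  show "(closed_segment (0, 0) (4, 0) :: pt set) \<inter> closed_segment (7, - 4) (7, 11) = {}"
    by (rule seg_disj[where n="(1,0)" and k="5"]) auto
  show "(closed_segment (0, 0) (4, 0) :: pt set) \<inter> closed_segment (7, 11) (0, 11) = {}"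
    by (rule seg_disj[where n="(0,1)" and k="1"]) auto
  show "(closed_segment (4, 0) (7, - 4) :: pt set) \<inter> closed_segment (7, 11) (0, 11) = {}"
    by (rule seg_disj[where n="(0,1)" and k="1"]) auto
  show "(closed_segment (4, 0) (7, - 4) :: pt set) \<inter> closed_segment (0, 11) (0, 0) = {}"
    by (rule seg_disj[where n="(-1,0)" and k="-2"]) auto
  show "(closed_segment (7, - 4) (7, 11) :: pt set) \<inter> closed_segment (0, 11) (0, 0) = {}"
    by (rule seg_disj[where n="(-1,0)" and k="-3"]) auto
qed

lemma vs0_area: "signed_area vs0 > 0"
proof -
  have l: "{..<length vs0} = {0,1,2,3,4}" by (auto simp: vs0_def)
  show ?thesis unfolding signed_area_def l by (simp add: vs0_def)
qed

lemma not_mono: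
  assumes wp: "wavefront_prop vs0 w0 ts Ss"
  shows "\<not> monotone_wrt (wface vs0 w0 ts Ss 0) (edir vs0 0)"
proof
  assume m: "monotone_wrt (wface vs0 w0 ts Ss 0) (edir vs0 0)"
  define F where "F = wface vs0 w0 ts Ss 0"
  define S where "S = F \<inter> {x. inner x (4,0) = 12}"
  have c: "connected S" using m unfolding monotone_wrt_def edirs S_def F_def by blast
  have "connected (snd ` S)" by (rule connected_continuous_image[OF continuous_on_snd[OF continuous_on_id] c])
  then have "is_interval (snd ` S)" by (simp add: is_interval_connected_1)
  then have iv: "\<And>a b x. a \<in> snd ` S \<Longrightarrow> b \<in> snd ` S \<Longrightarrow> a \<le> x \<Longrightarrow> x \<le> b \<Longrightarrow> x \<in> snd ` S"
    unfolding is_interval_1 by blast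
  have fin: "finite (set ts)" by simp
  obtain t1 where t1: "1/2 < t1" "t1 < 1" "t1 \<notin> set ts" using avoid_finite[OF _ fin, of "1/2" 1] by auto
  obtain t3 where t3: "4 < t3" "t3 < 5" "t3 \<notin> set ts" using avoid_finite[OF _ fin, of 4 5] by auto
  have a1: "3 \<le> av t1" using t1 by (auto simp: av_def max_def)
  have a3: "3 \<le> av t3" using t3 by (auto simp: av_def max_def)
  have "(3, t1) \<in> S" using in_face[OF wp, of t1 3] t1 a1 by (simp add: S_def F_def)
  moreover have "(3, t3) \<in> S" using in_face[OF wp, of t3 3] t3 a3 by (simp add: S_def F_def)
  ultimately have "t1 \<in> snd ` S" "t3 \<in> snd ` S" by (metis image_eqI snd_conv)+
  then have "2 \<in> snd ` S" using t1 t3 iv[of t1 t3 2] by simp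
  then obtain x where x: "x \<in> S" "snd x = 2" by auto
  then have "fst x = 3" by (cases x) (simp add: S_def)
  with x have "(3, 2) \<in> F" by (cases x) (simp add: S_def)
  with gap[OF wp] show False by (simp add: F_def)
qed

theorem lemma7:
  shows "\<exists>vs w e. simple_polygon vs \<and> signed_area vs > 0 \<and> (\<forall>i<length vs. 0 \<le> w i) \<and>
           e < length vs \<and>
           (\<exists>ts Ss. wavefront_prop vs w ts Ss) \<and>
           (\<forall>ts Ss. wavefront_prop vs w ts Ss \<longrightarrow>
                      \<not> monotone_wrt (wface vs w ts Ss e) (edir vs e))"
  apply (rule exI[of _ vs0], rule exI[of _ w0], rule exI[of _ 0])
proof (intro conjI)
  have len: "length vs0 = 5" by (simp add: vs0_def)
  show "simple_polygon vs0" by (rule vs0_simple)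
  show "signed_area vs0 > 0" by (rule vs0_area)
  show "\<forall>i<length vs0. 0 \<le> w0 i" by (simp add: w0_def)
  show "0 < length vs0" by (simp add: len)
  show "\<exists>ts Ss. wavefront_prop vs0 w0 ts Ss" using prop_ex by blast
  show "\<forall>ts Ss. wavefront_prop vs0 w0 ts Ss \<longrightarrow> \<not> monotone_wrt (wface vs0 w0 ts Ss 0) (edir vs0 0)"
    using not_mono by blast
qed

end
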